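(* Let $G\le\mathrm{Aut}(T)$ be a weakly branch group. Then the minimal compact $G$-spaces on which the $G$-action is faithful and micro-supported are exactly the highly proximal extensions of $\partial T$.
   Context: $T$ is a locally finite rooted tree, $\mathrm{Aut}(T)$ its root-fixing automorphisms, $\partial T$ its boundary (a compact $G$-space). $G$ is weakly branch if $T$ is infinite and spherically homogeneous, $G$ is transitive on each level, and for every vertex $v$ the subgroup of elements acting trivially outside the subtree below $v$ is non-trivial. An action of $G$ on a compact space $X$ is micro-supported if for every non-empty open $U\subset X$ the rigid stabilizer $\mathrm{Rist}_G(U)$ (elements fixing $X\setminus U$ pointwise) is non-trivial. A continuous surjective $G$-equivariant map $\pi:Y\to Z$ between compact $G$-spaces is a highly proximal extension if for every non-empty open $U\subseteq Y$ there exists $z\in Z$ with $\pi^{-1}(z)\subseteq U$; $Y$ is then a highly proximal extension of $Z$. *)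

theory Defs
  imports "HOL-Analysis.Analysis"
begin

text \<open>Spherically homogeneous locally finite rooted tree with branching sequence d:
  level n vertices have d n children.  Vertices are lists v with v!i < d i;
  the root is the empty list and the parent of v is butlast v.\<close>

definition tree_vertices :: "(nat \<Rightarrow> nat) \<Rightarrow> nat list set" where
  "tree_vertices d = {v. \<forall>i<length v. v ! i < d i}"

definition tree_level :: "(nat \<Rightarrow> nat) \<Rightarrow> nat \<Rightarrow> nat list set" where
  "tree_level d n = {v \<in> tree_vertices d. length v = n}"

definition tree_aut :: "(nat \<Rightarrow> nat) \<Rightarrow> (nat list \<Rightarrow> nat list) set" where
  "tree_aut d = {g. bij_betw g (tree_vertices d) (tree_vertices d)
                    \<and> (\<forall>v\<in>tree_vertices d. length (g v) = length v \<and> g (butlast v) = butlast (g v))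
                    \<and> (\<forall>v. v \<notin> tree_vertices d \<longrightarrow> g v = v)}"

definition subgroup_of_aut :: "(nat \<Rightarrow> nat) \<Rightarrow> (nat list \<Rightarrow> nat list) set \<Rightarrow> bool" where
  "subgroup_of_aut d G \<longleftrightarrow> G \<subseteq> tree_aut d \<and> id \<in> G
     \<and> (\<forall>g\<in>G. \<forall>h\<in>G. g \<circ> h \<in> G) \<and> (\<forall>g\<in>G. inv g \<in> G)"

text \<open>Boundary: infinite rays, i.e. sequences \<xi> with \<xi> i < d i, with the product of
  discrete topologies (the usual topology of \<partial>T).\<close>

definition boundary :: "(nat \<Rightarrow> nat) \<Rightarrow> (nat \<Rightarrow> nat) topology" where
  "boundary d = product_topology (\<lambda>i. discrete_topology {..<d i}) UNIV"

definition bdry_act :: "(nat list \<Rightarrow> nat list) \<Rightarrow> (nat \<Rightarrow> nat) \<Rightarrow> (nat \<Rightarrow> nat)" where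
  "bdry_act g \<xi> = (\<lambda>n. g (map \<xi> [0..<Suc n]) ! n)"

definition rist_vertex :: "(nat \<Rightarrow> nat) \<Rightarrow> (nat list \<Rightarrow> nat list) set \<Rightarrow> nat list
    \<Rightarrow> (nat list \<Rightarrow> nat list) set" where
  "rist_vertex d G v = {g \<in> G. \<forall>w\<in>tree_vertices d. take (length v) w \<noteq> v \<longrightarrow> g w = w}"

definition weakly_branch :: "(nat \<Rightarrow> nat) \<Rightarrow> (nat list \<Rightarrow> nat list) set \<Rightarrow> bool" where
  "weakly_branch d G \<longleftrightarrow> subgroup_of_aut d G
     \<and> (\<forall>n. d n \<ge> 1)
     \<and> (\<forall>n. \<forall>u\<in>tree_level d n. \<forall>v\<in>tree_level d n. \<exists>g\<in>G. g u = v)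
     \<and> (\<forall>v\<in>tree_vertices d. rist_vertex d G v \<noteq> {id})"

definition G_space :: "('g \<Rightarrow> 'g \<Rightarrow> 'g) \<Rightarrow> 'g \<Rightarrow> 'g set \<Rightarrow> 'a topology \<Rightarrow> ('g \<Rightarrow> 'a \<Rightarrow> 'a) \<Rightarrow> bool" where
  "G_space gmul e G X act \<longleftrightarrow>
     (\<forall>g\<in>G. continuous_map X X (act g))
     \<and> (\<forall>x\<in>topspace X. act e x = x)
     \<and> (\<forall>g\<in>G. \<forall>h\<in>G. \<forall>x\<in>topspace X. act (gmul g h) x = act g (act h x))"

definition minimal_action :: "'g set \<Rightarrow> 'a topology \<Rightarrow> ('g \<Rightarrow> 'a \<Rightarrow> 'a) \<Rightarrow> bool" where
  "minimal_action G X act \<longleftrightarrow> topspace X \<noteq> {} \<and>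
     (\<forall>Y. closedin X Y \<and> Y \<noteq> {} \<and> (\<forall>g\<in>G. act g ` Y \<subseteq> Y) \<longrightarrow> Y = topspace X)"

definition faithful_action :: "'g \<Rightarrow> 'g set \<Rightarrow> 'a topology \<Rightarrow> ('g \<Rightarrow> 'a \<Rightarrow> 'a) \<Rightarrow> bool" where
  "faithful_action e G X act \<longleftrightarrow> (\<forall>g\<in>G. (\<forall>x\<in>topspace X. act g x = x) \<longrightarrow> g = e)"

definition rist :: "'g set \<Rightarrow> 'a topology \<Rightarrow> ('g \<Rightarrow> 'a \<Rightarrow> 'a) \<Rightarrow> 'a set \<Rightarrow> 'g set" where
  "rist G X act U = {g \<in> G. \<forall>x\<in>topspace X - U. act g x = x}"

definition micro_supported :: "'g \<Rightarrow> 'g set \<Rightarrow> 'a topology \<Rightarrow> ('g \<Rightarrow> 'a \<Rightarrow> 'a) \<Rightarrow> bool" where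
  "micro_supported e G X act \<longleftrightarrow>
     (\<forall>U. openin X U \<and> U \<noteq> {} \<longrightarrow> rist G X act U \<noteq> {e})"

definition highly_proximal_ext :: "'g set \<Rightarrow> 'a topology \<Rightarrow> ('g \<Rightarrow> 'a \<Rightarrow> 'a)
    \<Rightarrow> 'b topology \<Rightarrow> ('g \<Rightarrow> 'b \<Rightarrow> 'b) \<Rightarrow> ('a \<Rightarrow> 'b) \<Rightarrow> bool" where
  "highly_proximal_ext G Y actY Z actZ \<pi> \<longleftrightarrow>
     continuous_map Y Z \<pi> \<and> \<pi> ` topspace Y = topspace Z
     \<and> (\<forall>g\<in>G. \<forall>y\<in>topspace Y. \<pi> (actY g y) = actZ g (\<pi> y))
     \<and> (\<forall>U. openin Y U \<and> U \<noteq> {} \<longrightarrow> (\<exists>z\<in>topspace Z. {y \<in> topspace Y. \<pi> y = z} \<subseteq> U))"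

end

theory Submission
  imports Defs
begin


abbreviation V where "V d \<equiv> tree_vertices d"
definition below :: "nat list \<Rightarrow> nat list \<Rightarrow> bool" where
  "below v u \<longleftrightarrow> take (length v) u = v"

lemma take_vertex: "u \<in> tree_vertices d \<Longrightarrow> take m u \<in> tree_vertices d"
  by (auto simp: tree_vertices_def)

lemma aut_props:
  assumes "g \<in> tree_aut d"
  shows "bij_betw g (V d) (V d)" "\<And>v. v \<in> V d \<Longrightarrow> length (g v) = length v"
    "\<And>v. v \<in> V d \<Longrightarrow> g (butlast v) = butlast (g v)"
    "\<And>v. v \<notin> V d \<Longrightarrow> g v = v"
  using assms unfolding tree_aut_def by auto

lemma aut_inj: assumes "g \<in> tree_aut d" shows "inj g"
proof
  fix x y assume e: "g x = g y"
  note p = aut_props[OF assms]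
  have gx: "x \<in> V d \<Longrightarrow> g x \<in> V d" using p(1) bij_betwE by blast
  have gy: "y \<in> V d \<Longrightarrow> g y \<in> V d" using p(1) bij_betwE by blast
  have inj: "inj_on g (V d)" using p(1) bij_betw_def by blast
  show "x = y"
  proof (cases "x \<in> V d")
    case True
    then show ?thesis
    proof (cases "y \<in> V d")
      case True then show ?thesis using inj_onD[OF inj e] \<open>x \<in> V d\<close> by blast
    next
      case False then have "g y = y" using p(4) by blast
      then show ?thesis using e gx True False by auto
    qed
  next
    case False
    then have gx: "g x = x" using p(4) by blast
    show ?thesis
    proof (cases "y \<in> V d")
      case True then show ?thesis using e gx gy False by auto
    next
      case False then have "g y = y" using p(4) by blast
      then show ?thesis using e gx by auto
    qed
  qed
qed

lemma aut_surj: assumes "g \<in> tree_aut d" shows "surj g"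
proof -
  note p = aut_props[OF assms]
  have "y \<in> range g" for y
  proof (cases "y \<in> V d")
    case True
    then have "y \<in> g ` V d" using p(1) bij_betw_imp_surj_on by blast
    then show ?thesis by blast
  next
    case False then have "g y = y" using p(4) by blast
    then show ?thesis by (metis rangeI)
  qed
  then show ?thesis by auto
qed

lemma aut_bij: "g \<in> tree_aut d \<Longrightarrow> bij g"
  unfolding bij_def using aut_inj aut_surj by simp

lemma aut_inv_comp1: "g \<in> tree_aut d \<Longrightarrow> inv g \<circ> g = id"
  using inv_o_cancel[OF aut_inj] by simp
lemma aut_inv_comp2: "g \<in> tree_aut d \<Longrightarrow> g \<circ> inv g = id"
  using aut_surj[of g d] surj_iff[of g] by simp
lemmas aut_inv_comp = aut_inv_comp1 aut_inv_comp2

lemma aut_inv_apply1: "g \<in> tree_aut d \<Longrightarrow> inv g (g x) = x"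
  using inv_f_f[OF aut_inj] by simp
lemma aut_inv_apply2: "g \<in> tree_aut d \<Longrightarrow> g (inv g x) = x"
  using surj_f_inv_f[OF aut_surj] by simp
lemmas aut_inv_apply = aut_inv_apply1 aut_inv_apply2

lemma aut_V: "g \<in> tree_aut d \<Longrightarrow> v \<in> V d \<Longrightarrow> g v \<in> V d"
  using aut_props(1) bij_betwE by blast

lemma aut_take:
  assumes "g \<in> tree_aut d" "u \<in> V d"
  shows "take m (g u) = g (take m u)"
  using assms(2)
proof (induction u arbitrary: m rule: rev_induct)
  case Nil
  have "g [] \<in> V d" using aut_V[OF assms(1) Nil] .
  then have "g [] = []" using aut_props(2)[OF assms(1) Nil] by simp
  then show ?case by simp
next
  case (snoc a u)
  have uV: "u \<in> V d" using take_vertex[OF snoc.prems, of "length u"] by simp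
  have l: "length (g (u @ [a])) = Suc (length u)" using aut_props(2)[OF assms(1) snoc.prems] by simp
  have b: "butlast (g (u @ [a])) = g u" using aut_props(3)[OF assms(1) snoc.prems] by simp
  obtain c where c: "g (u @ [a]) = g u @ [c]"
    using b l by (metis append_butlast_last_id list.size(3) nat.simps(3))
  have lu: "length (g u) = length u" using aut_props(2)[OF assms(1) uV] .
  show ?case
  proof (cases "m \<le> length u")
    case True
    have "take m (g (u @ [a])) = take m (g u)" unfolding c using True lu by (simp add: take_append)
    also have "\<dots> = g (take m u)" using snoc.IH[OF uV] .
    also have "\<dots> = g (take m (u @ [a]))" using True by simp
    finally show ?thesis .
  next
    case False
    have "take m (g (u @ [a])) = g (u @ [a])" using False l by simp
    also have "\<dots> = g (take m (u @ [a]))" using False by simp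
    finally show ?thesis .
  qed
qed


lemma aut_not_id: assumes "g \<in> tree_aut d" "g \<noteq> id" shows "\<exists>u\<in>V d. g u \<noteq> u"
proof (rule ccontr)
  assume "\<not> ?thesis"
  then have "g x = x" for x using aut_props(4)[OF assms(1)] by (cases "x \<in> V d") auto
  then show False using assms(2) by auto
qed

lemma below_mono:
  assumes "below v u" "below u w" shows "below v w"
proof -
  have "min (length v) (length u) = length v" using arg_cong[OF assms(1)[unfolded below_def], of length] by simp
  then have "length v \<le> length u" by (simp add: min_def split: if_splits)
  then show ?thesis using assms unfolding below_def by (metis min.absorb1 take_take)
qed

lemma below_same_len: "length v = length w \<Longrightarrow> v \<noteq> w \<Longrightarrow> below v x \<Longrightarrow> \<not> below w x"
  unfolding below_def by simp

locale wbg =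
  fixes d :: "nat \<Rightarrow> nat" and G :: "(nat list \<Rightarrow> nat list) set"
  assumes wb: "weakly_branch d G"
begin

lemma G_aut: "g \<in> G \<Longrightarrow> g \<in> tree_aut d"
  using wb unfolding weakly_branch_def subgroup_of_aut_def by blast
lemma id_G: "id \<in> G"
  using wb unfolding weakly_branch_def subgroup_of_aut_def by blast
lemma comp_G: "g \<in> G \<Longrightarrow> h \<in> G \<Longrightarrow> g \<circ> h \<in> G"
  using wb unfolding weakly_branch_def subgroup_of_aut_def by blast
lemma inv_G: "g \<in> G \<Longrightarrow> inv g \<in> G"
  using wb unfolding weakly_branch_def subgroup_of_aut_def by blast
lemma d_pos: "d n \<ge> 1"
  using wb unfolding weakly_branch_def by blast
lemma transitive: "u \<in> tree_level d n \<Longrightarrow> v \<in> tree_level d n \<Longrightarrow> \<exists>g\<in>G. g u = v"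
  using wb unfolding weakly_branch_def by blast
lemma rist_nontriv: "v \<in> V d \<Longrightarrow> \<exists>r\<in>rist_vertex d G v. r \<noteq> id"
proof -
  assume "v \<in> V d"
  then have "rist_vertex d G v \<noteq> {id}" using wb unfolding weakly_branch_def by blast
  moreover have "id \<in> rist_vertex d G v" using id_G unfolding rist_vertex_def by simp
  ultimately show ?thesis by blast
qed

lemma rist_G: "r \<in> rist_vertex d G v \<Longrightarrow> r \<in> G"
  unfolding rist_vertex_def by simp

lemma rist_fix: "r \<in> rist_vertex d G v \<Longrightarrow> \<not> below v w \<Longrightarrow> r w = w"
proof -
  assume r: "r \<in> rist_vertex d G v" and nb: "\<not> below v w"
  show "r w = w"
  proof (cases "w \<in> V d")
    case True then show ?thesis using r nb unfolding rist_vertex_def below_def by blast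
  next
    case False then show ?thesis using aut_props(4)[OF G_aut[OF rist_G[OF r]]] by blast
  qed
qed

lemma rist_below: assumes r: "r \<in> rist_vertex d G v" and b: "below v u"
  shows "below v (r u)"
proof (rule ccontr)
  assume "\<not> below v (r u)"
  then have "r (r u) = r u" using rist_fix[OF r] by blast
  then have "r u = u" using aut_inj[OF G_aut[OF rist_G[OF r]]] by (simp add: inj_eq)
  then show False using b \<open>\<not> below v (r u)\<close> by simp
qed

lemma rist_commute:
  assumes "length v = length w" "v \<noteq> w" "r \<in> rist_vertex d G v" "s \<in> rist_vertex d G w"
  shows "r \<circ> s = s \<circ> r"
proof
  fix x
  show "(r \<circ> s) x = (s \<circ> r) x"
  proof (cases "below v x")
    case True
    then have "\<not> below w x" using below_same_len assms(1,2) by blast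
    then have "s x = x" using rist_fix assms(4) by blast
    moreover have "below v (r x)" using rist_below[OF assms(3) True] .
    then have "\<not> below w (r x)" using below_same_len assms(1,2) by blast
    then have "s (r x) = r x" using rist_fix assms(4) by blast
    ultimately show ?thesis by simp
  next
    case False
    then have rx: "r x = x" using rist_fix assms(3) by blast
    show ?thesis
    proof (cases "below w x")
      case True
      have "below w (s x)" using rist_below[OF assms(4) True] .
      then have "\<not> below v (s x)" using below_same_len assms(1,2) by metis
      then have "r (s x) = s x" using rist_fix assms(3) by blast
      then show ?thesis using rx by simp
    next
      case False
      then have "s x = x" using rist_fix assms(4) by blast
      then show ?thesis using rx by simp
    qed
  qed
qed

lemma rist_conj:
  assumes g: "g \<in> G" and r: "r \<in> rist_vertex d G v" and v: "v \<in> V d"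
  shows "g \<circ> r \<circ> inv g \<in> rist_vertex d G (g v)"
proof -
  have ga: "g \<in> tree_aut d" using G_aut g .
  have "g \<circ> r \<circ> inv g \<in> G" using comp_G g rist_G[OF r] inv_G by blast
  moreover have "(g \<circ> r \<circ> inv g) w = w" if w: "w \<in> V d" "\<not> below (g v) w" for w
  proof -
    have "\<not> below v (inv g w)"
    proof
      assume "below v (inv g w)"
      then have "take (length v) (inv g w) = v" unfolding below_def .
      then have "g (take (length v) (inv g w)) = g v" by simp
      moreover have "inv g w \<in> V d" using aut_V[OF G_aut[OF inv_G[OF g]] w(1)] .
      ultimately have "take (length v) w = g v" using aut_take[OF ga] aut_inv_apply2[OF ga] by metis
      then show False using w(2) aut_props(2)[OF ga v] unfolding below_def by simp
    qed
    then have "r (inv g w) = inv g w" using rist_fix r by blast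
    then show ?thesis using aut_inv_apply2[OF ga] by simp
  qed
  ultimately show ?thesis unfolding rist_vertex_def below_def by blast
qed

lemma rist_mono: assumes "below v u" shows "rist_vertex d G u \<subseteq> rist_vertex d G v"
proof
  fix r assume r: "r \<in> rist_vertex d G u"
  have "r w = w" if "w \<in> V d" "\<not> below v w" for w
    using rist_fix[OF r] below_mono[OF assms] that by blast
  then show "r \<in> rist_vertex d G v" using r unfolding rist_vertex_def below_def by blast
qed

end

definition pref :: "(nat \<Rightarrow> nat) \<Rightarrow> nat \<Rightarrow> nat list" where
  "pref \<xi> n = map \<xi> [0..<n]"

lemma topspace_boundary: "topspace (boundary d) = {\<xi>. \<forall>i. \<xi> i < d i}"
  unfolding boundary_def by (auto simp: PiE_def Pi_def)

lemma pref_len[simp]: "length (pref \<xi> n) = n" unfolding pref_def by simp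
lemma pref_nth: "i < n \<Longrightarrow> pref \<xi> n ! i = \<xi> i" unfolding pref_def by simp
lemma pref_take: "take m (pref \<xi> n) = pref \<xi> (min m n)"
  unfolding pref_def by (cases "m \<le> n") (simp_all add: take_map take_upt min_def)
lemma pref_V: "\<forall>i. \<xi> i < d i \<Longrightarrow> pref \<xi> n \<in> V d"
  unfolding tree_vertices_def pref_def by simp
lemma pref_level: "\<forall>i. \<xi> i < d i \<Longrightarrow> pref \<xi> n \<in> tree_level d n"
  unfolding tree_level_def using pref_V by simp
lemma pref_eq: "(\<And>n. pref \<xi> n = pref \<eta> n) \<Longrightarrow> \<xi> = \<eta>"
proof
  fix i assume "\<And>n. pref \<xi> n = pref \<eta> n"
  then have "pref \<xi> (Suc i) ! i = pref \<eta> (Suc i) ! i" by simp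
  then show "\<xi> i = \<eta> i" by (simp add: pref_nth)
qed

lemma bdry_pref:
  assumes g: "g \<in> tree_aut d" and \<xi>: "\<forall>i. \<xi> i < d i"
  shows "pref (bdry_act g \<xi>) n = g (pref \<xi> n)"
proof (rule nth_equalityI)
  show "length (pref (bdry_act g \<xi>) n) = length (g (pref \<xi> n))"
    using aut_props(2)[OF g pref_V[OF \<xi>]] by simp
next
  fix i assume "i < length (pref (bdry_act g \<xi>) n)"
  then have i: "i < n" by simp
  have "pref (bdry_act g \<xi>) n ! i = g (pref \<xi> (Suc i)) ! i"
    using i by (simp add: pref_nth bdry_act_def pref_def del: upt_Suc)
  also have "pref \<xi> (Suc i) = take (Suc i) (pref \<xi> n)" using i by (simp add: pref_take)
  also have "g (take (Suc i) (pref \<xi> n)) = take (Suc i) (g (pref \<xi> n))"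
    using aut_take[OF g pref_V[OF \<xi>]] by simp
  also have "take (Suc i) (g (pref \<xi> n)) ! i = g (pref \<xi> n) ! i" by simp
  finally show "pref (bdry_act g \<xi>) n ! i = g (pref \<xi> n) ! i" .
qed

lemma bdry_ray:
  assumes g: "g \<in> tree_aut d" and \<xi>: "\<forall>i. \<xi> i < d i"
  shows "\<forall>i. bdry_act g \<xi> i < d i"
proof
  fix i
  have "g (pref \<xi> (Suc i)) \<in> V d" "length (g (pref \<xi> (Suc i))) = Suc i"
    using aut_V[OF g pref_V[OF \<xi>]] aut_props(2)[OF g pref_V[OF \<xi>]] by auto
  then show "bdry_act g \<xi> i < d i" unfolding bdry_act_def tree_vertices_def pref_def[symmetric] by auto
qed

definition ext :: "nat list \<Rightarrow> nat \<Rightarrow> nat" where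
  "ext v = (\<lambda>i. if i < length v then v ! i else 0)"

lemma ext_ray: "v \<in> V d \<Longrightarrow> (\<And>n. d n \<ge> 1) \<Longrightarrow> \<forall>i. ext v i < d i"
  unfolding ext_def tree_vertices_def by (auto simp: Suc_le_eq)

lemma ext_pref: "pref (ext v) (length v) = v"
  by (rule nth_equalityI) (auto simp: pref_nth ext_def)

lemma (in wbg) rist_fix_ray:
  assumes r: "r \<in> rist_vertex d G v" and \<xi>: "\<forall>i. \<xi> i < d i" and nb: "pref \<xi> (length v) \<noteq> v"
  shows "bdry_act r \<xi> = \<xi>"
proof
  fix n
  have "\<not> below v (pref \<xi> (Suc n))"
  proof (cases "length v \<le> Suc n")
    case True then show ?thesis using nb unfolding below_def by (simp add: pref_take min_def)
  next
    case False then show ?thesis unfolding below_def by (auto simp: pref_take min_def)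
  qed
  then have "r (pref \<xi> (Suc n)) = pref \<xi> (Suc n)" using rist_fix[OF r] by blast
  then show "bdry_act r \<xi> n = \<xi> n" unfolding bdry_act_def pref_def[symmetric] by (simp add: pref_nth)
qed




locale gsp = wbg d G for d G +
  fixes X :: "'a topology" and act :: "(nat list \<Rightarrow> nat list) \<Rightarrow> 'a \<Rightarrow> 'a"
  assumes gs: "G_space (\<circ>) id G X act" and cpt: "compact_space X" and haus: "Hausdorff_space X"
begin

lemma act_cont: "g \<in> G \<Longrightarrow> continuous_map X X (act g)"
  using gs unfolding G_space_def by blast
lemma act_top: assumes "g \<in> G" "x \<in> topspace X" shows "act g x \<in> topspace X"
  using act_cont[OF assms(1)] assms(2) unfolding continuous_map_def by blast
lemma act_id: "x \<in> topspace X \<Longrightarrow> act id x = x"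
  using gs unfolding G_space_def by blast
lemma act_comp: "g \<in> G \<Longrightarrow> h \<in> G \<Longrightarrow> x \<in> topspace X \<Longrightarrow> act (g \<circ> h) x = act g (act h x)"
  using gs unfolding G_space_def by blast
lemma act_inv1: assumes g: "g \<in> G" and x: "x \<in> topspace X" shows "act (inv g) (act g x) = x"
proof -
  have "act (inv g \<circ> g) x = act (inv g) (act g x)" by (rule act_comp[OF inv_G[OF g] g x])
  moreover have "inv g \<circ> g = id" by (rule aut_inv_comp1[OF G_aut[OF g]])
  ultimately show ?thesis using act_id[OF x] by simp
qed
lemma act_inv2: assumes g: "g \<in> G" and x: "x \<in> topspace X" shows "act g (act (inv g) x) = x"
proof -
  have "act (g \<circ> inv g) x = act g (act (inv g) x)" by (rule act_comp[OF g inv_G[OF g] x])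
  moreover have "g \<circ> inv g = id" by (rule aut_inv_comp2[OF G_aut[OF g]])
  ultimately show ?thesis using act_id[OF x] by simp
qed
lemma act_inj: assumes "g \<in> G" "x \<in> topspace X" "y \<in> topspace X" "act g x = act g y" shows "x = y"
proof -
  have "act (inv g) (act g x) = act (inv g) (act g y)" using assms(4) by simp
  then show ?thesis using act_inv1[OF assms(1,2)] act_inv1[OF assms(1,3)] by simp
qed

lemma moved_open: "g \<in> G \<Longrightarrow> openin X {x \<in> topspace X. act g x \<noteq> x}"
proof -
  assume g: "g \<in> G"
  have "closedin X {x \<in> topspace X. act g x = id x}"
    by (rule closedin_continuous_maps_eq[OF haus act_cont[OF g]]) simp
  then have "openin X (topspace X - {x \<in> topspace X. act g x = id x})" by (simp add: openin_diff)
  moreover have "topspace X - {x \<in> topspace X. act g x = id x} = {x \<in> topspace X. act g x \<noteq> x}" by auto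
  ultimately show ?thesis by simp
qed

lemma separate:
  assumes g: "g \<in> G" and x: "x \<in> topspace X" and m: "act g x \<noteq> x"
  shows "\<exists>W. openin X W \<and> x \<in> W \<and> (\<forall>y\<in>W. act g y \<notin> W)"
proof -
  have gx: "act g x \<in> topspace X" using act_top[OF g x] .
  have "\<exists>U V. openin X U \<and> openin X V \<and> x \<in> U \<and> act g x \<in> V \<and> disjnt U V"
    using haus x gx m unfolding Hausdorff_space_def by simp
  then obtain A B where AB: "openin X A" "openin X B" "x \<in> A" "act g x \<in> B" "disjnt A B"
    by blast
  define W where "W = {y \<in> A. act g y \<in> B}"
  have "openin X W" unfolding W_def
    by (rule openin_continuous_map_preimage_gen[OF act_cont[OF g] AB(1) AB(2)])
  moreover have "x \<in> W" unfolding W_def using AB(3,4) by simp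
  moreover have "act g y \<notin> W" if "y \<in> W" for y
  proof
    assume "act g y \<in> W"
    then have "act g y \<in> A" unfolding W_def by simp
    moreover have "act g y \<in> B" using that unfolding W_def by simp
    ultimately show False using AB(5) unfolding disjnt_def by blast
  qed
  ultimately show ?thesis by blast
qed

lemma rist_G': "k \<in> rist G X act U \<Longrightarrow> k \<in> G" unfolding rist_def by simp
lemma rist_fixX: "k \<in> rist G X act U \<Longrightarrow> x \<in> topspace X \<Longrightarrow> x \<notin> U \<Longrightarrow> act k x = x"
  unfolding rist_def by simp
lemma rist_inv: assumes k: "k \<in> rist G X act U" shows "inv k \<in> rist G X act U"
proof -
  have "act (inv k) x = x" if "x \<in> topspace X" "x \<notin> U" for x
    using act_inv1[OF rist_G'[OF k] that(1)] rist_fixX[OF k that] by simp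
  then show ?thesis using inv_G[OF rist_G'[OF k]] unfolding rist_def by blast
qed
lemma rist_comp: assumes k: "k \<in> rist G X act U" and l: "l \<in> rist G X act U"
  shows "k \<circ> l \<in> rist G X act U"
proof -
  have "act (k \<circ> l) x = x" if "x \<in> topspace X" "x \<notin> U" for x
    using act_comp[OF rist_G'[OF k] rist_G'[OF l] that(1)] rist_fixX[OF k that] rist_fixX[OF l that] by simp
  then show ?thesis using comp_G[OF rist_G'[OF k] rist_G'[OF l]] unfolding rist_def by blast
qed
lemma rist_mono': "U \<subseteq> U' \<Longrightarrow> rist G X act U \<subseteq> rist G X act U'"
  unfolding rist_def by auto
lemma rist_id: "id \<in> rist G X act U"
  unfolding rist_def using id_G act_id by auto
lemma rist_stay: assumes k: "k \<in> rist G X act U" and x: "x \<in> topspace X" "x \<in> U"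
  shows "act k x \<in> U"
proof (rule ccontr)
  assume a: "act k x \<notin> U"
  have kx: "act k x \<in> topspace X" using act_top[OF rist_G'[OF k] x(1)] .
  then have "act k (act k x) = act k x" using rist_fixX[OF k kx a] by simp
  then have "act k x = x" using act_inj[OF rist_G'[OF k] kx x(1)] by simp
  then show False using a x by simp
qed

end

locale hard = gsp d G X act for d G X act +
  assumes mini: "minimal_action G X act" and faith: "faithful_action id G X act"
    and micro: "micro_supported id G X act"
begin

lemma faithful': "g \<in> G \<Longrightarrow> g \<noteq> id \<Longrightarrow> \<exists>x\<in>topspace X. act g x \<noteq> x"
  using faith unfolding faithful_action_def by blast

lemma rist_moves: assumes k: "k \<in> rist G X act U" "k \<noteq> id"
  shows "\<exists>x\<in>topspace X. x \<in> U \<and> act k x \<noteq> x"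
  using faithful'[OF rist_G'[OF k(1)] k(2)] rist_fixX[OF k(1)] by blast

lemma micro': "openin X U \<Longrightarrow> U \<noteq> {} \<Longrightarrow> \<exists>k\<in>rist G X act U. k \<noteq> id"
  using micro rist_id unfolding micro_supported_def by blast

lemma split_open:
  assumes W: "openin X W" "W \<noteq> {}"
  shows "\<exists>W1 W2. openin X W1 \<and> openin X W2 \<and> W1 \<noteq> {} \<and> W2 \<noteq> {} \<and> W1 \<subseteq> W \<and> W2 \<subseteq> W \<and> W1 \<inter> W2 = {}"
proof -
  obtain a where a: "a \<in> rist G X act W" "a \<noteq> id" using micro'[OF W] by blast
  obtain x where x: "x \<in> topspace X" "x \<in> W" "act a x \<noteq> x" using rist_moves[OF a] by blast
  have aG: "a \<in> G" using rist_G'[OF a(1)] .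
  obtain W' where W': "openin X W'" "x \<in> W'" "\<forall>y\<in>W'. act a y \<notin> W'"
    using separate[OF aG x(1) x(3)] by blast
  define W1 where "W1 = W \<inter> W'"
  define W2 where "W2 = W \<inter> {y \<in> topspace X. act (inv a) y \<in> W1}"
  have o1: "openin X W1" unfolding W1_def using W(1) W'(1) by blast
  have o2: "openin X W2" unfolding W2_def
    using W(1) openin_continuous_map_preimage[OF act_cont[OF inv_G[OF aG]] o1] by blast
  have "x \<in> W1" unfolding W1_def using x W' by simp
  have "act a x \<in> W2" unfolding W2_def
    using act_inv1[OF aG x(1)] \<open>x \<in> W1\<close> act_top[OF aG x(1)] rist_stay[OF a(1) x(1) x(2)] by simp
  have "W1 \<inter> W2 = {}"
  proof (rule ccontr)
    assume "W1 \<inter> W2 \<noteq> {}"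
    then obtain y where y: "y \<in> W1" "y \<in> W2" by blast
    then have yt: "y \<in> topspace X" unfolding W2_def by simp
    have "act (inv a) y \<in> W'" using y unfolding W2_def W1_def by simp
    then have "act a (act (inv a) y) \<notin> W'" using W'(3) by blast
    then show False using act_inv2[OF aG yt] y unfolding W1_def by simp
  qed
  then show ?thesis using o1 o2 \<open>x \<in> W1\<close> \<open>act a x \<in> W2\<close> unfolding W1_def W2_def by blast
qed

lemma rist_infinite:
  assumes W: "openin X W" "W \<noteq> {}"
  shows "infinite (rist G X act W)"
proof (rule ccontr)
  assume "\<not> infinite (rist G X act W)"
  define P where "P n \<longleftrightarrow> (\<exists>W. openin X W \<and> W \<noteq> {} \<and> finite (rist G X act W) \<and> card (rist G X act W) = n)" for n
  have "P (card (rist G X act W))" using W \<open>\<not> infinite (rist G X act W)\<close> unfolding P_def by blast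
  define n where "n = (LEAST n. P n)"
  have Pn: "P n" unfolding n_def by (rule LeastI) fact
  have least: "\<And>m. P m \<Longrightarrow> n \<le> m" unfolding n_def by (rule Least_le)
  obtain W0 where W0: "openin X W0" "W0 \<noteq> {}" "finite (rist G X act W0)" "card (rist G X act W0) = n"
    using Pn unfolding P_def by blast
  obtain W1 W2 where s: "openin X W1" "openin X W2" "W1 \<noteq> {}" "W2 \<noteq> {}" "W1 \<subseteq> W0" "W2 \<subseteq> W0" "W1 \<inter> W2 = {}"
    using split_open[OF W0(1,2)] by blast
  have sub1: "rist G X act W1 \<subseteq> rist G X act W0" using rist_mono' s(5) .
  have sub2: "rist G X act W2 \<subseteq> rist G X act W0" using rist_mono' s(6) .
  have f1: "finite (rist G X act W1)" using finite_subset[OF sub1 W0(3)] .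
  have f2: "finite (rist G X act W2)" using finite_subset[OF sub2 W0(3)] .
  have c1: "n \<le> card (rist G X act W1)" using least f1 s(1,3) unfolding P_def by blast
  obtain b where b: "b \<in> rist G X act W2" "b \<noteq> id" using micro'[OF s(2,4)] by blast
  have "{id, b} \<subseteq> rist G X act W2" using b rist_id by blast
  moreover have "card {id, b} = 2" using b(2) by simp
  ultimately have c2: "2 \<le> card (rist G X act W2)" using card_mono[OF f2] by metis
  have int: "rist G X act W1 \<inter> rist G X act W2 \<subseteq> {id}"
  proof
    fix k assume k: "k \<in> rist G X act W1 \<inter> rist G X act W2"
    have "act k x = x" if "x \<in> topspace X" for x
    proof (cases "x \<in> W1")
      case True then have "x \<notin> W2" using s(7) by blast
      then show ?thesis using rist_fixX k that by blast
    next
      case False then show ?thesis using rist_fixX k that by blast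
    qed
    then have "k = id" using faithful' rist_G' k by blast
    then show "k \<in> {id}" by simp
  qed
  have "card (rist G X act W1 \<union> rist G X act W2) + card (rist G X act W1 \<inter> rist G X act W2)
        = card (rist G X act W1) + card (rist G X act W2)"
    using card_Un_Int[OF f1 f2] by simp
  moreover have "card (rist G X act W1 \<inter> rist G X act W2) \<le> 1"
    using card_mono[OF _ int] by simp
  moreover have "card (rist G X act W1 \<union> rist G X act W2) \<le> n"
    using card_mono[OF W0(3)] sub1 sub2 W0(4) by (metis Un_least)
  ultimately show False using c1 c2 by linarith
qed

end




lemma finite_level: "finite (tree_level d n)"
proof -
  have "tree_level d n \<subseteq> {xs. set xs \<subseteq> {..<(\<Sum>i<n. d i)} \<and> length xs = n}"
  proof
    fix xs assume xs: "xs \<in> tree_level d n"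
    have "x < (\<Sum>i<n. d i)" if "x \<in> set xs" for x
    proof -
      obtain i where i: "i < length xs" "xs ! i = x" using \<open>x \<in> set xs\<close> by (metis in_set_conv_nth)
      have "x < d i" using xs i unfolding tree_level_def tree_vertices_def by auto
      also have "d i \<le> (\<Sum>i<n. d i)" using i xs unfolding tree_level_def
        by (intro member_le_sum) auto
      finally show ?thesis .
    qed
    then show "xs \<in> {xs. set xs \<subseteq> {..<(\<Sum>i<n. d i)} \<and> length xs = n}"
      using xs unfolding tree_level_def by auto
  qed
  moreover have "finite {xs. set xs \<subseteq> {..<(\<Sum>i<n. d i)} \<and> length xs = n}"
    by (rule finite_lists_length_eq) simp
  ultimately show ?thesis by (rule finite_subset)
qed

lemma (in wbg) aut_level: "g \<in> G \<Longrightarrow> u \<in> tree_level d n \<Longrightarrow> g u \<in> tree_level d n"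
  unfolding tree_level_def using aut_V[OF G_aut] aut_props(2)[OF G_aut] by auto

lemma (in wbg) comm_rist:
  assumes r: "r \<in> rist_vertex d G v" and v: "v \<in> V d" and a: "a \<in> G" "a v = v"
  shows "r \<circ> inv a \<circ> inv r \<circ> a \<in> rist_vertex d G v"
proof -
  have rG: "r \<in> G" using rist_G[OF r] .
  have "r \<circ> inv a \<circ> inv r \<circ> a \<in> G" using comp_G inv_G rG a(1) by metis
  moreover have "(r \<circ> inv a \<circ> inv r \<circ> a) z = z" if z: "z \<in> V d" "\<not> below v z" for z
  proof -
    have "\<not> below v (a z)"
    proof
      assume "below v (a z)"
      then have "take (length v) (a z) = v" unfolding below_def .
      then have "a (take (length v) z) = a v" using aut_take[OF G_aut[OF a(1)] z(1)] a(2) by simp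
      then have "take (length v) z = v" using aut_inj[OF G_aut[OF a(1)]] by (simp add: inj_eq)
      then show False using z(2) unfolding below_def by simp
    qed
    then have "r (a z) = a z" using rist_fix[OF r] by blast
    then have "inv r (a z) = a z" using aut_inv_apply1[OF G_aut[OF rG], of "a z"] by simp
    moreover have "inv a (a z) = z" using aut_inv_apply1[OF G_aut[OF a(1)]] .
    moreover have "r z = z" using rist_fix[OF r z(2)] .
    ultimately show ?thesis by simp
  qed
  ultimately show ?thesis unfolding rist_vertex_def below_def by blast
qed

context hard
begin

lemma rist_stab:
  assumes W: "openin X W" "W \<noteq> {}"
  shows "\<exists>q\<in>rist G X act W. q \<noteq> id \<and> (\<forall>u\<in>tree_level d n. q u = u)"
proof -
  define R where "R = rist G X act W"
  define \<phi> where "\<phi> k = restrict k (tree_level d n)" for k :: "nat list \<Rightarrow> nat list"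
  have inf: "infinite R" unfolding R_def using rist_infinite[OF W] .
  have "\<phi> ` R \<subseteq> PiE (tree_level d n) (\<lambda>_. tree_level d n)"
  proof
    fix f assume "f \<in> \<phi> ` R"
    then obtain k where k: "k \<in> R" "f = \<phi> k" by blast
    have "k \<in> G" using k(1) rist_G' unfolding R_def by blast
    then show "f \<in> PiE (tree_level d n) (\<lambda>_. tree_level d n)"
      unfolding k(2) \<phi>_def using aut_level by auto
  qed
  moreover have "finite (PiE (tree_level d n) (\<lambda>_. tree_level d n))"
    by (rule finite_PiE) (simp_all add: finite_level)
  ultimately have "finite (\<phi> ` R)" by (rule finite_subset)
  then obtain k0 where k0: "k0 \<in> R" "infinite {k \<in> R. \<phi> k = \<phi> k0}"
    using pigeonhole_infinite[OF inf] by blast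
  then have "infinite ({k \<in> R. \<phi> k = \<phi> k0} - {k0})" by simp
  then have "{k \<in> R. \<phi> k = \<phi> k0} - {k0} \<noteq> {}" by (metis finite.emptyI)
  then obtain k1 where k1: "k1 \<in> R" "\<phi> k1 = \<phi> k0" "k1 \<noteq> k0" by blast
  have k0G: "k0 \<in> G" and k1G: "k1 \<in> G" using k0(1) k1(1) rist_G' unfolding R_def by blast+
  define q where "q = k1 \<circ> inv k0"
  have "q \<in> R" unfolding q_def R_def using rist_comp rist_inv k0(1) k1(1) unfolding R_def by blast
  moreover have "q \<noteq> id"
  proof
    assume "q = id"
    then have "k1 \<circ> inv k0 \<circ> k0 = k0" unfolding q_def by simp
    then have "k1 = k0" using aut_inv_comp1[OF G_aut[OF k0G]] by (simp add: o_assoc[symmetric])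
    then show False using k1(3) by simp
  qed
  moreover have "q u = u" if u: "u \<in> tree_level d n" for u
  proof -
    have u': "inv k0 u \<in> tree_level d n" using aut_level[OF inv_G[OF k0G] u] .
    have "k1 (inv k0 u) = k0 (inv k0 u)"
      using fun_cong[OF k1(2), of "inv k0 u"] u' unfolding \<phi>_def by simp
    then show ?thesis unfolding q_def using aut_inv_apply2[OF G_aut[OF k0G]] by simp
  qed
  ultimately show ?thesis unfolding R_def by blast
qed

lemma noncomm:
  assumes W: "openin X W" "W \<noteq> {}"
  shows "\<exists>a b. a \<in> rist G X act W \<and> b \<in> rist G X act W \<and> (\<forall>u\<in>tree_level d n. a u = u)
           \<and> (\<forall>u\<in>tree_level d n. b u = u) \<and> a \<circ> b \<noteq> b \<circ> a"
proof -
  obtain a where a: "a \<in> rist G X act W" "a \<noteq> id" "\<forall>u\<in>tree_level d n. a u = u"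
    using rist_stab[OF W] by blast
  have aG: "a \<in> G" using rist_G'[OF a(1)] .
  obtain x where x: "x \<in> topspace X" "x \<in> W" "act a x \<noteq> x" using rist_moves[OF a(1,2)] by blast
  obtain W' where W': "openin X W'" "x \<in> W'" "\<forall>y\<in>W'. act a y \<notin> W'"
    using separate[OF aG x(1) x(3)] by blast
  define W1 where "W1 = W \<inter> W'"
  have o1: "openin X W1" "W1 \<noteq> {}" unfolding W1_def using W(1) W'(1,2) x(2) by blast+
  obtain b where b: "b \<in> rist G X act W1" "b \<noteq> id" "\<forall>u\<in>tree_level d n. b u = u"
    using rist_stab[OF o1] by blast
  have bG: "b \<in> G" using rist_G'[OF b(1)] .
  obtain z where z: "z \<in> topspace X" "z \<in> W1" "act b z \<noteq> z" using rist_moves[OF b(1,2)] by blast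
  have bW: "b \<in> rist G X act W" using rist_mono'[of W1 W] b(1) unfolding W1_def by blast
  have "a \<circ> b \<noteq> b \<circ> a"
  proof
    assume c: "a \<circ> b = b \<circ> a"
    define y where "y = act (inv a) z"
    have yt: "y \<in> topspace X" unfolding y_def using act_top[OF inv_G[OF aG] z(1)] .
    have ay: "act a y = z" unfolding y_def using act_inv2[OF aG z(1)] .
    have "y \<notin> W1"
    proof
      assume "y \<in> W1"
      then have "act a y \<notin> W'" using W'(3) unfolding W1_def by blast
      then show False using ay z(2) unfolding W1_def by simp
    qed
    then have by': "act b y = y" using rist_fixX[OF b(1) yt] by simp
    have "act b z = act (b \<circ> a) y" using act_comp[OF bG aG yt] ay by simp
    also have "\<dots> = act (a \<circ> b) y" using c by simp
    also have "\<dots> = z" using act_comp[OF aG bG yt] by' ay by simp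
    finally show False using z(3) by simp
  qed
  then show ?thesis using a(1,3) bW b(3) by blast
qed

end




context hard
begin

definition S :: "nat list \<Rightarrow> 'a set" where
  "S v = {x \<in> topspace X. \<exists>r\<in>rist_vertex d G v. act r x \<noteq> x}"

lemma S_top: "S v \<subseteq> topspace X" unfolding S_def by blast

lemma S_open: "openin X (S v)"
proof -
  have "S v = \<Union> ((\<lambda>r. {x \<in> topspace X. act r x \<noteq> x}) ` rist_vertex d G v)"
    unfolding S_def by blast
  moreover have "openin X {x \<in> topspace X. act r x \<noteq> x}" if "r \<in> rist_vertex d G v" for r
    using moved_open[OF rist_G[OF that]] .
  ultimately show ?thesis by (auto intro!: openin_Union)
qed

lemma S_Union_open: "openin X (\<Union>v\<in>A. S v)"
  by (intro openin_Union) (auto simp: S_open)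

lemma S_ne: "v \<in> V d \<Longrightarrow> S v \<noteq> {}"
proof -
  assume v: "v \<in> V d"
  obtain r where r: "r \<in> rist_vertex d G v" "r \<noteq> id" using rist_nontriv[OF v] by blast
  obtain x where "x \<in> topspace X" "act r x \<noteq> x" using faithful'[OF rist_G[OF r(1)] r(2)] by blast
  then show ?thesis using r(1) unfolding S_def by blast
qed

lemma S_mono: "below v u \<Longrightarrow> S u \<subseteq> S v"
  using rist_mono unfolding S_def by blast

lemma act_conj: assumes g: "g \<in> G" and r: "r \<in> G" and y: "y \<in> topspace X"
  shows "act (g \<circ> r \<circ> inv g) y = act g (act r (act (inv g) y))"
proof -
  have "act (g \<circ> r \<circ> inv g) y = act (g \<circ> r) (act (inv g) y)"
    using act_comp[OF comp_G[OF g r] inv_G[OF g] y] .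
  also have "\<dots> = act g (act r (act (inv g) y))"
    using act_comp[OF g r act_top[OF inv_G[OF g] y]] .
  finally show ?thesis .
qed

lemma S_act: assumes g: "g \<in> G" and v: "v \<in> V d" and x: "x \<in> S v" shows "act g x \<in> S (g v)"
proof -
  obtain r where r: "r \<in> rist_vertex d G v" "act r x \<noteq> x" and xt: "x \<in> topspace X"
    using x unfolding S_def by blast
  have rG: "r \<in> G" using rist_G[OF r(1)] .
  have gxt: "act g x \<in> topspace X" using act_top[OF g xt] .
  have "act (g \<circ> r \<circ> inv g) (act g x) = act g (act r x)"
    using act_conj[OF g rG gxt] act_inv1[OF g xt] by simp
  moreover have "act g (act r x) \<noteq> act g x"
    using act_inj[OF g act_top[OF rG xt] xt] r(2) by blast
  ultimately show ?thesis using rist_conj[OF g r(1) v] gxt unfolding S_def by force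
qed

lemma act_comm4:
  assumes g: "g \<in> G" and Wg: "\<forall>y\<in>W. act g y \<notin> W" and a: "a \<in> rist G X act W"
    and y: "y \<in> topspace X" "y \<in> W"
  shows "act (g \<circ> inv a \<circ> inv g \<circ> a) y = act a y"
proof -
  have aG: "a \<in> G" using rist_G'[OF a] .
  define y1 where "y1 = act a y"
  have y1: "y1 \<in> topspace X" "y1 \<in> W" unfolding y1_def using act_top[OF aG y(1)] rist_stay[OF a y] by auto
  define y2 where "y2 = act (inv g) y1"
  have y2t: "y2 \<in> topspace X" unfolding y2_def using act_top[OF inv_G[OF g] y1(1)] .
  have gy2: "act g y2 = y1" unfolding y2_def using act_inv2[OF g y1(1)] .
  have "y2 \<notin> W" using Wg gy2 y1(2) by metis
  then have ay2: "act (inv a) y2 = y2" using rist_fixX[OF rist_inv[OF a] y2t] by simp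
  have "act (g \<circ> inv a \<circ> inv g \<circ> a) y = act (g \<circ> inv a \<circ> inv g) y1"
    unfolding y1_def using act_comp[OF comp_G[OF comp_G[OF g inv_G[OF aG]] inv_G[OF g]] aG y(1)] .
  also have "\<dots> = act (g \<circ> inv a) y2"
    unfolding y2_def using act_comp[OF comp_G[OF g inv_G[OF aG]] inv_G[OF g] y1(1)] .
  also have "\<dots> = act g (act (inv a) y2)" using act_comp[OF g inv_G[OF aG] y2t] .
  also have "\<dots> = y1" using ay2 gy2 by simp
  finally show ?thesis unfolding y1_def .
qed

lemma S_disjoint:
  assumes v: "v \<in> tree_level d n" and w: "w \<in> tree_level d n" and vw: "v \<noteq> w"
  shows "S v \<inter> S w = {}"
proof (rule ccontr)
  assume "S v \<inter> S w \<noteq> {}"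
  then obtain x where x: "x \<in> S v" "x \<in> S w" by blast
  obtain g where g: "g \<in> rist_vertex d G v" "act g x \<noteq> x" and xt: "x \<in> topspace X"
    using x(1) unfolding S_def by blast
  obtain h where h: "h \<in> rist_vertex d G w" "act h x \<noteq> x"
    using x(2) unfolding S_def by blast
  have gG: "g \<in> G" and hG: "h \<in> G" using rist_G g(1) h(1) by blast+
  obtain Wg where Wg: "openin X Wg" "x \<in> Wg" "\<forall>y\<in>Wg. act g y \<notin> Wg"
    using separate[OF gG xt g(2)] by blast
  obtain Wh where Wh: "openin X Wh" "x \<in> Wh" "\<forall>y\<in>Wh. act h y \<notin> Wh"
    using separate[OF hG xt h(2)] by blast
  define W where "W = Wg \<inter> Wh"
  have Wo: "openin X W" "W \<noteq> {}" unfolding W_def using Wg Wh by blast+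
  have Wg': "\<forall>y\<in>W. act g y \<notin> W" and Wh': "\<forall>y\<in>W. act h y \<notin> W" using Wg(3) Wh(3) unfolding W_def by blast+
  obtain a b where ab: "a \<in> rist G X act W" "b \<in> rist G X act W" "\<forall>u\<in>tree_level d n. a u = u"
           "\<forall>u\<in>tree_level d n. b u = u" "a \<circ> b \<noteq> b \<circ> a"
    using noncomm[OF Wo] by blast
  have aG: "a \<in> G" and bG: "b \<in> G" using rist_G' ab(1,2) by blast+
  have vV: "v \<in> V d" and wV: "w \<in> V d" using v w unfolding tree_level_def by blast+
  have lv: "length v = length w" using v w unfolding tree_level_def by simp
  define c where "c = g \<circ> inv a \<circ> inv g \<circ> a"
  define e where "e = h \<circ> inv b \<circ> inv h \<circ> b"
  have cR: "c \<in> rist_vertex d G v" unfolding c_def using comm_rist[OF g(1) vV aG] ab(3) v by blast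
  have eR: "e \<in> rist_vertex d G w" unfolding e_def using comm_rist[OF h(1) wV bG] ab(4) w by blast
  have cG: "c \<in> G" and eG: "e \<in> G" using rist_G cR eR by blast+
  have ce: "c \<circ> e = e \<circ> c" using rist_commute[OF lv vw cR eR] .
  have cW: "act c y = act a y" if "y \<in> topspace X" "y \<in> W" for y
    unfolding c_def using act_comm4[OF gG Wg' ab(1) that] .
  have eW: "act e y = act b y" if "y \<in> topspace X" "y \<in> W" for y
    unfolding e_def using act_comm4[OF hG Wh' ab(2) that] .
  define q where "q = a \<circ> b \<circ> inv a \<circ> inv b"
  have qG: "q \<in> G" unfolding q_def using comp_G inv_G aG bG by metis
  have qa: "act q y = act a (act b (act (inv a) (act (inv b) y)))" if y: "y \<in> topspace X" for y
  proof -
    have t1: "act (inv b) y \<in> topspace X" using act_top[OF inv_G[OF bG] y] .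
    have t2: "act (inv a) (act (inv b) y) \<in> topspace X" using act_top[OF inv_G[OF aG] t1] .
    have "act q y = act (a \<circ> b \<circ> inv a) (act (inv b) y)"
      unfolding q_def using act_comp[OF comp_G[OF comp_G[OF aG bG] inv_G[OF aG]] inv_G[OF bG] y] .
    also have "\<dots> = act (a \<circ> b) (act (inv a) (act (inv b) y))"
      using act_comp[OF comp_G[OF aG bG] inv_G[OF aG] t1] .
    also have "\<dots> = act a (act b (act (inv a) (act (inv b) y)))"
      using act_comp[OF aG bG t2] .
    finally show ?thesis .
  qed
  have "act q y = y" if y: "y \<in> topspace X" for y
  proof (cases "y \<in> W")
    case False
    have "act (inv b) y = y" using rist_fixX[OF rist_inv[OF ab(2)] y False] .
    moreover have "act (inv a) y = y" using rist_fixX[OF rist_inv[OF ab(1)] y False] .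
    moreover have "act b y = y" using rist_fixX[OF ab(2) y False] .
    moreover have "act a y = y" using rist_fixX[OF ab(1) y False] .
    ultimately show ?thesis using qa[OF y] by simp
  next
    case True
    define y1 where "y1 = act (inv b) y"
    have y1: "y1 \<in> topspace X" "y1 \<in> W" unfolding y1_def
      using act_top[OF inv_G[OF bG] y] rist_stay[OF rist_inv[OF ab(2)] y True] by auto
    define y2 where "y2 = act (inv a) y1"
    have y2: "y2 \<in> topspace X" "y2 \<in> W" unfolding y2_def
      using act_top[OF inv_G[OF aG] y1(1)] rist_stay[OF rist_inv[OF ab(1)] y1] by auto
    have ay2: "act a y2 = y1" unfolding y2_def using act_inv2[OF aG y1(1)] .
    have by1: "act b y1 = y" unfolding y1_def using act_inv2[OF bG y] .
    have by2: "act b y2 \<in> topspace X" "act b y2 \<in> W" using act_top[OF bG y2(1)] rist_stay[OF ab(2) y2] by auto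
    have "act a (act b y2) = act c (act e y2)" using cW[OF by2] eW[OF y2] by simp
    also have "\<dots> = act (c \<circ> e) y2" using act_comp[OF cG eG y2(1)] by simp
    also have "\<dots> = act (e \<circ> c) y2" using ce by simp
    also have "\<dots> = act e (act c y2)" using act_comp[OF eG cG y2(1)] .
    also have "\<dots> = act e y1" using cW[OF y2] ay2 by simp
    also have "\<dots> = y" using eW[OF y1] by1 by simp
    finally show ?thesis using qa[OF y] unfolding y1_def y2_def by simp
  qed
  then have "q = id" using faithful'[OF qG] by blast
  have "a \<circ> b = b \<circ> a"
  proof
    fix z
    have "q (b (a z)) = a (b (inv a (inv b (b (a z)))))" unfolding q_def by simp
    also have "\<dots> = a (b z)" using aut_inv_apply1[OF G_aut[OF bG]] aut_inv_apply1[OF G_aut[OF aG]] by simp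
    finally show "(a \<circ> b) z = (b \<circ> a) z" using \<open>q = id\<close> by simp
  qed
  then show False using ab(5) by simp
qed

lemma level_ne: "tree_level d n \<noteq> {}"
proof -
  have "\<forall>i. (\<lambda>_. 0::nat) i < d i" using d_pos by (simp add: Suc_le_eq)
  then have "pref (\<lambda>_. 0) n \<in> tree_level d n" by (rule pref_level)
  then show ?thesis by blast
qed

lemma S_cover: "topspace X = (\<Union>v\<in>tree_level d n. S v)"
proof -
  define C where "C = topspace X - (\<Union>v\<in>tree_level d n. S v)"
  have "openin X (\<Union>v\<in>tree_level d n. S v)" using S_Union_open .
  then have cl: "closedin X C" unfolding C_def by blast
  have inv: "act g ` C \<subseteq> C" if g: "g \<in> G" for g
  proof
    fix y assume "y \<in> act g ` C"
    then obtain x where x: "x \<in> C" "y = act g x" by blast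
    have xt: "x \<in> topspace X" using x(1) unfolding C_def by blast
    have "y \<notin> S v" if v: "v \<in> tree_level d n" for v
    proof
      assume "y \<in> S v"
      then have "act (inv g) y \<in> S (inv g v)" using S_act[OF inv_G[OF g]] v unfolding tree_level_def by blast
      moreover have "act (inv g) y = x" using x(2) act_inv1[OF g xt] by simp
      moreover have "inv g v \<in> tree_level d n" using aut_level[OF inv_G[OF g] v] .
      ultimately show False using x(1) unfolding C_def by blast
    qed
    then show "y \<in> C" unfolding C_def using act_top[OF g xt] x(2) by blast
  qed
  obtain v where v: "v \<in> tree_level d n" using level_ne by blast
  then have "S v \<noteq> {}" using S_ne unfolding tree_level_def by blast
  then have "C \<noteq> topspace X" using v S_top unfolding C_def by blast
  then have "C = {}" using mini cl inv unfolding minimal_action_def by blast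
  then show ?thesis using S_top unfolding C_def by blast
qed

lemma S_unique: "x \<in> topspace X \<Longrightarrow> \<exists>!v. v \<in> tree_level d n \<and> x \<in> S v"
  using S_cover[of n] S_disjoint[of _ n] by blast

definition lv :: "'a \<Rightarrow> nat \<Rightarrow> nat list" where
  "lv x n = (THE v. v \<in> tree_level d n \<and> x \<in> S v)"

lemma lv_prop: "x \<in> topspace X \<Longrightarrow> lv x n \<in> tree_level d n \<and> x \<in> S (lv x n)"
  unfolding lv_def using theI'[OF S_unique] by blast

lemma lv_unique: "v \<in> tree_level d n \<Longrightarrow> x \<in> S v \<Longrightarrow> lv x n = v"
  unfolding lv_def using S_unique S_top by blast

lemma lv_take: assumes x: "x \<in> topspace X" and m: "m \<le> n" shows "take m (lv x n) = lv x m"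
proof -
  have p: "lv x n \<in> tree_level d n" "x \<in> S (lv x n)" using lv_prop[OF x] by auto
  have "take m (lv x n) \<in> tree_level d m"
    using p(1) m take_vertex unfolding tree_level_def by auto
  moreover have "below (take m (lv x n)) (lv x n)" unfolding below_def using p(1) m
    unfolding tree_level_def by (simp add: min_def)
  then have "x \<in> S (take m (lv x n))" using S_mono p(2) by blast
  ultimately show ?thesis using lv_unique by metis
qed

definition proj :: "'a \<Rightarrow> nat \<Rightarrow> nat" where
  "proj x = (\<lambda>i. lv x (Suc i) ! i)"

lemma proj_pref: assumes x: "x \<in> topspace X" shows "pref (proj x) n = lv x n"
proof (rule nth_equalityI)
  show "length (pref (proj x) n) = length (lv x n)" using lv_prop[OF x] unfolding tree_level_def by simp
next
  fix i assume "i < length (pref (proj x) n)"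
  then have i: "i < n" by simp
  have "proj x i = take (Suc i) (lv x n) ! i" unfolding proj_def using lv_take[OF x, of "Suc i" n] i by simp
  also have "\<dots> = lv x n ! i" by simp
  finally show "pref (proj x) n ! i = lv x n ! i" using i by (simp add: pref_nth)
qed

lemma proj_ray: assumes x: "x \<in> topspace X" shows "\<forall>i. proj x i < d i"
proof
  fix i
  have "lv x (Suc i) \<in> tree_level d (Suc i)" using lv_prop[OF x] by blast
  then show "proj x i < d i" unfolding proj_def tree_level_def tree_vertices_def by auto
qed

lemma proj_cont: "continuous_map X (boundary d) proj"
  unfolding boundary_def continuous_map_componentwise_UNIV
proof
  fix k
  show "continuous_map X (discrete_topology {..<d k}) (\<lambda>x. proj x k)"
    unfolding continuous_map_def
  proof (intro conjI allI impI Pi_I)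
    fix x assume "x \<in> topspace X"
    then show "proj x k \<in> topspace (discrete_topology {..<d k})" using proj_ray by simp
  next
    fix U assume "openin (discrete_topology {..<d k}) U"
    have "{x \<in> topspace X. proj x k \<in> U} = (\<Union>v\<in>{v\<in>tree_level d (Suc k). v ! k \<in> U}. S v)"
    proof
      show "{x \<in> topspace X. proj x k \<in> U} \<subseteq> (\<Union>v\<in>{v\<in>tree_level d (Suc k). v ! k \<in> U}. S v)"
        unfolding proj_def using lv_prop by blast
      show "(\<Union>v\<in>{v\<in>tree_level d (Suc k). v ! k \<in> U}. S v) \<subseteq> {x \<in> topspace X. proj x k \<in> U}"
        unfolding proj_def using lv_unique S_top by blast
    qed
    moreover have "openin X (\<Union>v\<in>{v\<in>tree_level d (Suc k). v ! k \<in> U}. S v)" using S_Union_open .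
    ultimately show "openin X {x \<in> topspace X. proj x k \<in> U}" by simp
  qed
qed

lemma proj_equiv: assumes g: "g \<in> G" and x: "x \<in> topspace X"
  shows "proj (act g x) = bdry_act g (proj x)"
proof (rule pref_eq)
  fix n
  have gx: "act g x \<in> topspace X" using act_top[OF g x] .
  have p: "lv x n \<in> tree_level d n" "x \<in> S (lv x n)" using lv_prop[OF x] by auto
  have "act g x \<in> S (g (lv x n))" using S_act[OF g _ p(2)] p(1) unfolding tree_level_def by blast
  then have "lv (act g x) n = g (lv x n)" using lv_unique aut_level[OF g p(1)] by blast
  then show "pref (proj (act g x)) n = pref (bdry_act g (proj x)) n"
    using proj_pref[OF gx] proj_pref[OF x] bdry_pref[OF G_aut[OF g] proj_ray[OF x]] by simp
qed

lemma S_closed: assumes v: "v \<in> V d" shows "closedin X (S v)"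
proof -
  define n where "n = length v"
  have vl: "v \<in> tree_level d n" using v unfolding n_def tree_level_def by simp
  have "S v = topspace X - (\<Union>w\<in>tree_level d n - {v}. S w)"
    using S_cover[of n] S_disjoint[OF vl] vl by blast
  moreover have "openin X (\<Union>w\<in>tree_level d n - {v}. S w)" using S_Union_open .
  ultimately show ?thesis by (simp add: closedin_diff)
qed

lemma proj_surj: "proj ` topspace X = topspace (boundary d)"
proof
  show "proj ` topspace X \<subseteq> topspace (boundary d)" using proj_ray topspace_boundary by auto
next
  show "topspace (boundary d) \<subseteq> proj ` topspace X"
  proof
    fix \<xi> assume "\<xi> \<in> topspace (boundary d)"
    then have \<xi>: "\<forall>i. \<xi> i < d i" using topspace_boundary by simp
    define C where "C n = S (pref \<xi> n)" for n
    have "(\<Inter>n. C n) \<noteq> {}"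
    proof (rule compact_space_imp_nest[OF cpt])
      show "closedin X (C n)" for n unfolding C_def using S_closed pref_V[OF \<xi>] by blast
      show "C n \<noteq> {}" for n unfolding C_def using S_ne pref_V[OF \<xi>] by blast
      show "decseq C" unfolding decseq_Suc_iff C_def
      proof
        fix n
        have "below (pref \<xi> n) (pref \<xi> (Suc n))" unfolding below_def by (simp add: pref_take)
        then show "S (pref \<xi> (Suc n)) \<subseteq> S (pref \<xi> n)" using S_mono by blast
      qed
    qed
    then obtain x where x: "\<And>n. x \<in> S (pref \<xi> n)" unfolding C_def by blast
    have xt: "x \<in> topspace X" using x[of 0] S_top by blast
    have "proj x = \<xi>"
    proof (rule pref_eq)
      fix n show "pref (proj x) n = pref \<xi> n"
        using proj_pref[OF xt] lv_unique[OF pref_level[OF \<xi>] x] by simp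
    qed
    then show "\<xi> \<in> proj ` topspace X" using xt by blast
  qed
qed

lemma proj_hp: assumes U: "openin X U" "U \<noteq> {}"
  shows "\<exists>z\<in>topspace (boundary d). {y \<in> topspace X. proj y = z} \<subseteq> U"
proof -
  obtain k where k: "k \<in> rist G X act U" "k \<noteq> id" using micro'[OF U] by blast
  have kG: "k \<in> G" using rist_G'[OF k(1)] .
  obtain u where u: "u \<in> V d" "k u \<noteq> u" using aut_not_id[OF G_aut[OF kG] k(2)] by blast
  define n where "n = length u"
  have ul: "u \<in> tree_level d n" using u unfolding n_def tree_level_def by simp
  have kul: "k u \<in> tree_level d n" using aut_level[OF kG ul] .
  have dis: "S u \<inter> S (k u) = {}" using S_disjoint[OF ul kul] u(2) by metis
  have SU: "S u \<subseteq> U"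
  proof
    fix x assume x: "x \<in> S u"
    show "x \<in> U"
    proof (rule ccontr)
      assume "x \<notin> U"
      then have "act k x = x" using rist_fixX[OF k(1)] x S_top by blast
      moreover have "act k x \<in> S (k u)" using S_act[OF kG u(1) x] .
      ultimately have "x \<in> S u \<inter> S (k u)" using x by simp
      then show False using dis by simp
    qed
  qed
  have z: "\<forall>i. ext u i < d i" using ext_ray[OF u(1)] d_pos by blast
  have "{y \<in> topspace X. proj y = ext u} \<subseteq> S u"
  proof
    fix y assume y: "y \<in> {y \<in> topspace X. proj y = ext u}"
    then have "lv y n = u" using proj_pref[of y n] ext_pref[of u] unfolding n_def by simp
    then show "y \<in> S u" using lv_prop[of y n] y by auto
  qed
  then show ?thesis using SU z topspace_boundary by auto
qed

lemma hard_dir: "\<exists>\<pi>. highly_proximal_ext G X act (boundary d) bdry_act \<pi>"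
  unfolding highly_proximal_ext_def using proj_cont proj_surj proj_equiv proj_hp by blast

end




lemma bdry_compact: "compact_space (boundary d)"
  unfolding boundary_def compact_space_product_topology by (simp add: compact_space_discrete_topology)

lemma bdry_haus: "Hausdorff_space (boundary d)"
  unfolding boundary_def Hausdorff_space_product_topology by simp

lemma bdry_open_nbhd:
  assumes O: "openin (boundary d) Ob" and \<xi>: "\<xi> \<in> Ob"
  shows "\<exists>N. \<forall>\<eta>\<in>topspace (boundary d). pref \<eta> N = pref \<xi> N \<longrightarrow> \<eta> \<in> Ob"
proof -
  obtain U where U: "finite {i \<in> UNIV. U i \<noteq> topspace (discrete_topology {..<d i})}"
    "\<forall>i\<in>UNIV. openin (discrete_topology {..<d i}) (U i)" "\<xi> \<in> PiE UNIV U" "PiE UNIV U \<subseteq> Ob"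
    using O \<xi> unfolding boundary_def openin_product_topology_alt by blast
  obtain N where N: "\<forall>i\<in>{i \<in> UNIV. U i \<noteq> topspace (discrete_topology {..<d i})}. i < N"
    using U(1) finite_nat_set_iff_bounded by blast
  have "\<eta> \<in> Ob" if \<eta>: "\<eta> \<in> topspace (boundary d)" "pref \<eta> N = pref \<xi> N" for \<eta>
  proof -
    have "\<eta> i \<in> U i" for i
    proof (cases "i < N")
      case True
      then have "\<eta> i = \<xi> i" using arg_cong[OF \<eta>(2), of "\<lambda>l. l ! i"] by (simp add: pref_nth)
      then show ?thesis using U(3) by auto
    next
      case False
      then have "U i = {..<d i}" using N by auto
      then show ?thesis using \<eta>(1) topspace_boundary by auto
    qed
    then have "\<eta> \<in> PiE UNIV U" by auto
    then show ?thesis using U(4) by blast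
  qed
  then show ?thesis by blast
qed

lemma bdry_open_cyl:
  assumes A: "A \<subseteq> topspace (boundary d)"
    and sat: "\<And>\<xi> \<eta>. \<xi> \<in> A \<Longrightarrow> \<eta> \<in> topspace (boundary d) \<Longrightarrow> pref \<eta> N = pref \<xi> N \<Longrightarrow> \<eta> \<in> A"
  shows "openin (boundary d) A"
  unfolding boundary_def openin_product_topology_alt
proof
  fix \<xi> assume \<xi>: "\<xi> \<in> A"
  then have \<xi>r: "\<forall>i. \<xi> i < d i" using A topspace_boundary by auto
  define U where "U i = (if i < N then {\<xi> i} else {..<d i})" for i
  have "finite {i \<in> UNIV. U i \<noteq> topspace (discrete_topology {..<d i})}"
    by (rule finite_subset[of _ "{..<N}"]) (auto simp: U_def)
  moreover have "\<forall>i\<in>UNIV. openin (discrete_topology {..<d i}) (U i)" using \<xi>r by (auto simp: U_def)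
  moreover have "\<xi> \<in> PiE UNIV U" using \<xi>r by (auto simp: U_def)
  moreover have "PiE UNIV U \<subseteq> A"
  proof
    fix \<eta> assume \<eta>: "\<eta> \<in> PiE UNIV U"
    have ei: "\<eta> i \<in> U i" for i using \<eta> by auto
    have e: "\<eta> i = \<xi> i" if "i < N" for i using that ei[of i] by (simp add: U_def)
    have r: "\<eta> i < d i" for i using ei[of i] \<xi>r[rule_format, of i] by (auto simp: U_def split: if_splits)
    have "pref \<eta> N = pref \<xi> N" unfolding pref_def using e by simp
    then show "\<eta> \<in> A" using sat[OF \<xi>] r topspace_boundary by auto
  qed
  ultimately show "\<exists>U. finite {i \<in> UNIV. U i \<noteq> topspace (discrete_topology {..<d i})} \<and>
             (\<forall>i\<in>UNIV. openin (discrete_topology {..<d i}) (U i)) \<and> \<xi> \<in> PiE UNIV U \<and> PiE UNIV U \<subseteq> A"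
    by blast
qed

lemma (in wbg) bdry_minimal:
  assumes Z: "closedin (boundary d) Z" "Z \<noteq> {}" and inv: "\<And>g \<zeta>. g \<in> G \<Longrightarrow> \<zeta> \<in> Z \<Longrightarrow> bdry_act g \<zeta> \<in> Z"
  shows "Z = topspace (boundary d)"
proof (rule ccontr)
  assume "Z \<noteq> topspace (boundary d)"
  then obtain \<xi> where \<xi>: "\<xi> \<in> topspace (boundary d)" "\<xi> \<notin> Z" using closedin_subset[OF Z(1)] by blast
  have "openin (boundary d) (topspace (boundary d) - Z)" using Z(1) by (simp add: closedin_def)
  then obtain N where N: "\<forall>\<eta>\<in>topspace (boundary d). pref \<eta> N = pref \<xi> N \<longrightarrow> \<eta> \<in> topspace (boundary d) - Z"
    using bdry_open_nbhd \<xi> by blast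
  obtain \<zeta> where \<zeta>: "\<zeta> \<in> Z" using Z(2) by blast
  have \<zeta>r: "\<forall>i. \<zeta> i < d i" using \<zeta> closedin_subset[OF Z(1)] topspace_boundary by auto
  have \<xi>r: "\<forall>i. \<xi> i < d i" using \<xi> topspace_boundary by auto
  obtain g where g: "g \<in> G" "g (pref \<zeta> N) = pref \<xi> N" using transitive pref_level[OF \<zeta>r] pref_level[OF \<xi>r] by blast
  define \<eta> where "\<eta> = bdry_act g \<zeta>"
  have "\<eta> \<in> Z" unfolding \<eta>_def using inv[OF g(1) \<zeta>] .
  moreover have "pref \<eta> N = pref \<xi> N" unfolding \<eta>_def using bdry_pref[OF G_aut[OF g(1)] \<zeta>r] g(2) by simp
  moreover have "\<eta> \<in> topspace (boundary d)" unfolding \<eta>_def using bdry_ray[OF G_aut[OF g(1)] \<zeta>r] topspace_boundary by auto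
  ultimately show False using N by blast
qed

locale easy = gsp d G X act for d G X act +
  fixes \<pi> assumes hp: "highly_proximal_ext G X act (boundary d) bdry_act \<pi>"
begin

lemma pi_cont: "continuous_map X (boundary d) \<pi>" using hp unfolding highly_proximal_ext_def by blast
lemma pi_surj: "\<pi> ` topspace X = topspace (boundary d)" using hp unfolding highly_proximal_ext_def by blast
lemma pi_equiv: "g \<in> G \<Longrightarrow> y \<in> topspace X \<Longrightarrow> \<pi> (act g y) = bdry_act g (\<pi> y)"
  using hp unfolding highly_proximal_ext_def by blast
lemma pi_hp: "openin X U \<Longrightarrow> U \<noteq> {} \<Longrightarrow> \<exists>z\<in>topspace (boundary d). {y \<in> topspace X. \<pi> y = z} \<subseteq> U"
  using hp unfolding highly_proximal_ext_def by blast

lemma pi_top: "y \<in> topspace X \<Longrightarrow> \<pi> y \<in> topspace (boundary d)" using pi_surj by blast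

lemma fix_lift:
  assumes g: "g \<in> G" and Vs: "openin (boundary d) Vs" and fx: "\<And>z. z \<in> Vs \<Longrightarrow> bdry_act g z = z"
    and y: "y \<in> topspace X" "\<pi> y \<in> Vs"
  shows "act g y = y"
proof (rule ccontr)
  assume m: "act g y \<noteq> y"
  obtain W where W: "openin X W" "y \<in> W" "\<forall>y\<in>W. act g y \<notin> W" using separate[OF g y(1) m] by blast
  define A where "A = {x \<in> W. \<pi> x \<in> Vs}"
  have Ao: "openin X A" unfolding A_def by (rule openin_continuous_map_preimage_gen[OF pi_cont W(1) Vs])
  have "y \<in> A" unfolding A_def using W(2) y(2) by simp
  then obtain z where z: "z \<in> topspace (boundary d)" "{x \<in> topspace X. \<pi> x = z} \<subseteq> A"
    using pi_hp[OF Ao] by blast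
  obtain y' where y': "y' \<in> topspace X" "\<pi> y' = z" using z(1) pi_surj by (metis imageE)
  have "y' \<in> A" using z(2) y' by blast
  then have y'W: "y' \<in> W" and "z \<in> Vs" unfolding A_def using y' by auto
  then have "bdry_act g z = z" using fx by blast
  then have "\<pi> (act g y') = z" using pi_equiv[OF g y'(1)] y'(2) by simp
  then have "act g y' \<in> A" using z(2) act_top[OF g y'(1)] by blast
  then have "act g y' \<in> W" unfolding A_def by simp
  then show False using W(3) y'W by blast
qed

lemma easy_minimal: "minimal_action G X act"
  unfolding minimal_action_def
proof (intro conjI allI impI)
  have "\<forall>i. (\<lambda>_. 0::nat) i < d i" using d_pos by (simp add: Suc_le_eq)
  then have "(\<lambda>_. 0::nat) \<in> topspace (boundary d)" using topspace_boundary by auto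
  then show "topspace X \<noteq> {}" using pi_surj by auto
next
  fix Y assume Y: "closedin X Y \<and> Y \<noteq> {} \<and> (\<forall>g\<in>G. act g ` Y \<subseteq> Y)"
  have Yt: "Y \<subseteq> topspace X" using Y closedin_subset by blast
  have "compactin X Y" using closedin_compact_space[OF cpt] Y by blast
  then have "compactin (boundary d) (\<pi> ` Y)" using image_compactin pi_cont by blast
  then have cl: "closedin (boundary d) (\<pi> ` Y)" using compactin_imp_closedin[OF bdry_haus] by blast
  have full: "\<pi> ` Y = topspace (boundary d)"
  proof (rule bdry_minimal[OF cl])
    show "\<pi> ` Y \<noteq> {}" using Y by blast
    fix g \<zeta> assume g: "g \<in> G" and "\<zeta> \<in> \<pi> ` Y"
    then obtain y where y: "y \<in> Y" "\<zeta> = \<pi> y" by blast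
    have "bdry_act g \<zeta> = \<pi> (act g y)" using pi_equiv[OF g] y Yt by auto
    moreover have "act g y \<in> Y" using Y g y(1) by blast
    ultimately show "bdry_act g \<zeta> \<in> \<pi> ` Y" by blast
  qed
  show "Y = topspace X"
  proof (rule ccontr)
    assume "Y \<noteq> topspace X"
    then have ne: "topspace X - Y \<noteq> {}" using Yt by blast
    have "openin X (topspace X - Y)" using Y by blast
    then obtain z where z: "z \<in> topspace (boundary d)" "{x \<in> topspace X. \<pi> x = z} \<subseteq> topspace X - Y"
      using pi_hp ne by blast
    obtain y where "y \<in> Y" "\<pi> y = z" using full z(1) by (metis imageE)
    then show False using z(2) Yt by blast
  qed
qed

lemma easy_faithful: "faithful_action id G X act"
  unfolding faithful_action_def
proof (rule ballI, rule impI)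
  fix g assume g: "g \<in> G" and t: "\<forall>x\<in>topspace X. act g x = x"
  have fixb: "bdry_act g \<xi> = \<xi>" if "\<xi> \<in> topspace (boundary d)" for \<xi>
  proof -
    have "\<xi> \<in> \<pi> ` topspace X" using pi_surj that by simp
    then obtain x where x: "x \<in> topspace X" "\<xi> = \<pi> x" by blast
    have "act g x = x" using t x(1) by blast
    then show ?thesis using pi_equiv[OF g x(1)] x(2) by simp
  qed
  have "g u = u" for u
  proof (cases "u \<in> V d")
    case True
    have r: "\<forall>i. ext u i < d i" using ext_ray[OF True] d_pos by blast
    have "ext u \<in> topspace (boundary d)" using r topspace_boundary by simp
    then have "bdry_act g (ext u) = ext u" by (rule fixb)
    then have "pref (bdry_act g (ext u)) (length u) = u" using ext_pref by simp
    then show ?thesis using bdry_pref[OF G_aut[OF g] r] ext_pref by simp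
  next
    case False then show ?thesis using aut_props(4)[OF G_aut[OF g]] by blast
  qed
  then show "g = id" by (intro ext) simp
qed

lemma easy_micro: "micro_supported id G X act"
  unfolding micro_supported_def
proof (intro allI impI)
  fix U assume U: "openin X U \<and> U \<noteq> {}"
  obtain z where z: "z \<in> topspace (boundary d)" "{x \<in> topspace X. \<pi> x = z} \<subseteq> U" using pi_hp U by blast
  define K where "K = \<pi> ` (topspace X - U)"
  have "closedin X (topspace X - U)" using U by blast
  then have "compactin X (topspace X - U)" using closedin_compact_space[OF cpt] by blast
  then have "compactin (boundary d) K" unfolding K_def using image_compactin pi_cont by blast
  then have Kc: "closedin (boundary d) K" using compactin_imp_closedin[OF bdry_haus] by blast
  have "z \<notin> K" using z(2) unfolding K_def by blast
  then have "z \<in> topspace (boundary d) - K" using z(1) by blast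
  moreover have "openin (boundary d) (topspace (boundary d) - K)" using Kc by (simp add: closedin_def)
  ultimately obtain N where N: "\<forall>\<eta>\<in>topspace (boundary d). pref \<eta> N = pref z N \<longrightarrow> \<eta> \<in> topspace (boundary d) - K"
    using bdry_open_nbhd by blast
  have zr: "\<forall>i. z i < d i" using z(1) topspace_boundary by auto
  define v where "v = pref z N"
  have vV: "v \<in> V d" unfolding v_def using pref_V[OF zr] .
  obtain r where r: "r \<in> rist_vertex d G v" "r \<noteq> id" using rist_nontriv[OF vV] by blast
  have rG: "r \<in> G" using rist_G[OF r(1)] .
  define Vo where "Vo = {\<xi> \<in> topspace (boundary d). pref \<xi> N \<noteq> v}"
  have Vo: "openin (boundary d) Vo" unfolding Vo_def by (rule bdry_open_cyl[where N = N]) auto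
  have fx: "bdry_act r \<xi> = \<xi>" if "\<xi> \<in> Vo" for \<xi>
    using rist_fix_ray[OF r(1)] that topspace_boundary unfolding Vo_def v_def by auto
  have "act r x = x" if x: "x \<in> topspace X" "x \<notin> U" for x
  proof -
    have "\<pi> x \<in> K" unfolding K_def using x by blast
    then have "pref (\<pi> x) N \<noteq> v" using N pi_top[OF x(1)] unfolding v_def by blast
    then have "\<pi> x \<in> Vo" unfolding Vo_def using pi_top[OF x(1)] by blast
    then show ?thesis using fix_lift[OF rG Vo fx x(1)] by blast
  qed
  then have "r \<in> rist G X act U" unfolding rist_def using rG by blast
  then show "rist G X act U \<noteq> {id}" using r(2) by blast
qed

end



theorem corollary5p35:
  fixes d :: "nat \<Rightarrow> nat"
    and G :: "(nat list \<Rightarrow> nat list) set"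
    and X :: "'a topology"
    and act :: "(nat list \<Rightarrow> nat list) \<Rightarrow> 'a \<Rightarrow> 'a"
  assumes "weakly_branch d G"
    and "G_space (\<circ>) id G X act"
    and "compact_space X" and "Hausdorff_space X"
  shows "(minimal_action G X act \<and> faithful_action id G X act \<and> micro_supported id G X act)
     \<longleftrightarrow> (\<exists>\<pi>. highly_proximal_ext G X act (boundary d) bdry_act \<pi>)"
proof
  assume L: "minimal_action G X act \<and> faithful_action id G X act \<and> micro_supported id G X act"
  have "hard d G X act"
    unfolding hard_def hard_axioms_def gsp_def gsp_axioms_def wbg_def using assms L by blast
  then show "\<exists>\<pi>. highly_proximal_ext G X act (boundary d) bdry_act \<pi>" by (rule hard.hard_dir)
next
  assume "\<exists>\<pi>. highly_proximal_ext G X act (boundary d) bdry_act \<pi>"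
  then obtain \<pi> where p: "highly_proximal_ext G X act (boundary d) bdry_act \<pi>" by blast
  have e: "easy d G X act \<pi>"
    unfolding easy_def easy_axioms_def gsp_def gsp_axioms_def wbg_def using assms p by blast
  show "minimal_action G X act \<and> faithful_action id G X act \<and> micro_supported id G X act"
    using easy.easy_minimal[OF e] easy.easy_faithful[OF e] easy.easy_micro[OF e] by blast
qed

end
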